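(* For all $a,b\in\mathbb R$, \[\frac{1}{1+|a|}\le\frac{e^{a-b}-1}{a-b}\cdot\frac{1+e^b}{1+e^a},\] where for $a=b$ the factor $\frac{e^{a-b}-1}{a-b}$ is interpreted as $1$. *)

theory Defs
  imports Complex_Main
begin

end

theory Submission
  imports Defs
begin

lemma sinh2: "0 \<le> (x::real) \<Longrightarrow> 2*x \<le> exp x - exp (-x)"
  using real_le_x_sinh[of x] by (simp add: exp_minus)

lemma caseii:
  fixes a t :: real assumes "0 < t" "0 \<le> a"
  shows "t * (1 + exp a) \<le> (1 - exp (-t)) * (1 + exp (a + t))"
proof -
  have e1: "exp t - 1 \<ge> t" using exp_ge_add_one_self[of t] by linarith
  have s: "exp t - exp (-t) \<ge> 2*t" using sinh2 assms by simp
  have ea: "exp a - 1 \<ge> 0" using assms by simp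
  have "(exp a - 1) * t \<le> (exp a - 1) * (exp t - 1)" using e1 ea by (rule mult_left_mono)
  moreover have "(1 - exp (-t)) * (1 + exp (a + t)) = (exp t - exp (-t)) + (exp a - 1) * (exp t - 1)"
    by (simp add: exp_add algebra_simps exp_minus_inverse)
  ultimately show ?thesis using s by (simp add: algebra_simps)
qed

lemma caseiii:
  fixes a b :: real assumes "0 \<le> b" "b < a"
  shows "(a - b) * (1 + exp a) \<le> (1 + a) * ((exp (a - b) - 1) * (1 + exp b))"
proof -
  define d where "d = a - b"
  have d0: "0 < d" "d \<le> a" using assms d_def by auto
  have e1: "exp d - 1 \<ge> d" using exp_ge_add_one_self[of d] by linarith
  have "(1 + d) * exp (-d) \<le> exp d * exp (-d)"
    using exp_ge_add_one_self[of d] by (intro mult_right_mono) auto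
  then have "(1 + d) * exp (-d) \<le> 1" by (simp add: exp_minus_inverse)
  then have f1: "(1 - exp (-d)) * (1 + d) \<ge> d" by (simp add: algebra_simps)
  have pos: "1 - exp (-d) \<ge> 0" using d0 by simp
  have f2: "(1 - exp (-d)) * (1 + a) \<ge> d"
    using f1 mult_left_mono[OF _ pos, of "1+d" "1+a"] d0 by linarith
  have f3: "(exp d - 1) * (1 + a) \<ge> d"
  proof -
    have "(exp d - 1) * 1 \<le> (exp d - 1) * (1 + a)"
      using e1 d0 by (intro mult_left_mono) auto
    then show ?thesis using e1 by simp
  qed
  have f4: "exp a * ((1 - exp (-d)) * (1 + a)) \<ge> exp a * d"
    using f2 by (intro mult_left_mono) auto
  have eq: "(exp (a - b) - 1) * (1 + exp b) = (exp d - 1) + exp a * (1 - exp (-d))"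
    unfolding d_def by (simp add: exp_diff exp_minus field_simps)
  show ?thesis unfolding eq using f3 f4 by (simp add: d_def[symmetric] algebra_simps)
qed

lemma caseiv:
  fixes a c :: real assumes "0 \<le> a" "0 < c"
  shows "(a + c) * (1 + exp a) \<le> (1 + a) * ((exp (a + c) - 1) * (1 + exp (-c)))"
proof -
  have eq: "(exp (a + c) - 1) * (1 + exp (-c)) = (1 + exp c) * (exp a - 1) + (exp c - exp (-c))"
    by (simp add: exp_add exp_minus field_simps)
  have s: "exp c - exp (-c) \<ge> 2*c" using sinh2 assms by simp
  have ec: "1 + exp c \<ge> 2 + c" using exp_ge_add_one_self[of c] by linarith
  have ea: "exp a - 1 \<ge> 0" using assms by simp
  have "(1 + exp c) * (exp a - 1) \<ge> (2 + c) * (exp a - 1)"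
    using ec ea by (rule mult_right_mono)
  then have Q: "(exp (a + c) - 1) * (1 + exp (-c)) \<ge> (2 + c) * (exp a - 1) + 2*c"
    unfolding eq using s by linarith
  have Q2: "(1 + a) * ((exp (a + c) - 1) * (1 + exp (-c))) \<ge> (1 + a) * ((2 + c) * (exp a - 1) + 2*c)"
    using Q assms by (intro mult_left_mono) auto
  define E where "E = exp a - (1 + a)"
  have E0: "E \<ge> 0" unfolding E_def using exp_ge_add_one_self[of a] by linarith
  have "(1 + a) * ((2 + c) * (exp a - 1) + 2*c) - (a + c) * (1 + exp a)
        = ((1 + a) * (2 + c) - (a + c)) * E + (a*a + 2*a*c + a*a*c)"
    unfolding E_def by (simp add: algebra_simps)
  moreover have "((1 + a) * (2 + c) - (a + c)) * E \<ge> 0"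
    using assms E0 by (intro mult_nonneg_nonneg) (auto simp: algebra_simps)
  moreover have "a*a + 2*a*c + a*a*c \<ge> 0" using assms by simp
  ultimately show ?thesis using Q2 by linarith
qed

lemma frac_help:
  fixes N D p :: real assumes "D > 0" "p > 0" "D \<le> p * N"
  shows "1 / p \<le> N / D"
  using assms by (simp add: divide_simps mult.commute)

lemma core:
  fixes a b :: real assumes a0: "0 \<le> a"
  shows "1 / (1 + \<bar>a\<bar>) \<le>
    (if a = b then 1 else (exp (a - b) - 1) / (a - b)) * ((1 + exp b) / (1 + exp a))"
proof (cases "a = b")
  case True
  have "0 < 1 + exp b" by (simp add: add_pos_pos)
  then show ?thesis using True a0 by simp
next
  case False
  have R: "(exp (a - b) - 1) / (a - b) * ((1 + exp b) / (1 + exp a))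
     = ((exp (a - b) - 1) * (1 + exp b)) / ((a - b) * (1 + exp a))" by simp
  have pa: "1 + exp a > 0" by (simp add: add_pos_pos)
  consider "a < b" | "0 \<le> b" "b < a" | "b < 0" "b < a" using False a0 by linarith
  then show ?thesis
  proof cases
    case 1
    define t where "t = b - a"
    have t0: "t > 0" using 1 t_def by simp
    have eq: "((exp (a - b) - 1) * (1 + exp b)) / ((a - b) * (1 + exp a))
       = ((1 - exp (-t)) * (1 + exp (a + t))) / (t * (1 + exp a))"
      unfolding t_def by (simp add: divide_simps algebra_simps) 
    have "1 / (1 + a) \<le> ((1 - exp (-t)) * (1 + exp (a + t))) / (t * (1 + exp a))"
      using caseii[OF t0 a0] t0 pa a0
      by (intro frac_help) (auto intro: order_trans[OF _ mult_right_mono[of 1 "1+a"]])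
    then show ?thesis using False a0 R eq by simp
  next
    case 2
    have "1 / (1 + a) \<le> ((exp (a - b) - 1) * (1 + exp b)) / ((a - b) * (1 + exp a))"
      using caseiii[OF 2] 2 pa a0 by (intro frac_help) auto
    then show ?thesis using False a0 R by simp
  next
    case 3
    define c where "c = - b"
    have c0: "c > 0" using 3 c_def by simp
    have "1 / (1 + a) \<le> ((exp (a - b) - 1) * (1 + exp b)) / ((a - b) * (1 + exp a))"
      using caseiv[OF a0 c0] 3 pa a0 unfolding c_def by (intro frac_help) auto
    then show ?thesis using False a0 R by simp
  qed
qed

theorem lemma4:
  fixes a b :: real
  shows "1 / (1 + \<bar>a\<bar>) \<le>
    (if a = b then 1 else (exp (a - b) - 1) / (a - b)) * ((1 + exp b) / (1 + exp a))"
proof (cases "0 \<le> a")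
  case True
  then show ?thesis by (rule core)
next
  case False
  have c: "1 / (1 + \<bar>-a\<bar>) \<le>
    (if -a = -b then 1 else (exp (-a - -b) - 1) / (-a - -b)) * ((1 + exp (-b)) / (1 + exp (-a)))"
    using False by (intro core) simp
  have "(exp (-a - -b) - 1) / (-a - -b) * ((1 + exp (-b)) / (1 + exp (-a)))
      = (exp (a - b) - 1) / (a - b) * ((1 + exp b) / (1 + exp a))" if "a \<noteq> b"
  proof -
    have "exp (-a - -b) = exp b / exp a" "exp (a - b) = exp a / exp b" "exp (-b) = 1 / exp b"
      "exp (-a) = 1 / exp a" by (simp_all add: exp_diff exp_minus divide_inverse)
    moreover have "(B/A - 1)/(-a - -b) * ((1 + 1/B)/(1 + 1/A)) = (A/B - 1)/(a-b) * ((1+B)/(1+A))"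
      if "A > 0" "B > 0" for A B :: real
    proof -
      have h1: "B/A - 1 = (B - A)/A" "1 + 1/B = (B+1)/B" "1 + 1/A = (A+1)/A"
        using that by (simp_all add: field_simps)
      have "(B/A - 1) * ((1 + 1/B)/(1 + 1/A)) = ((B - A)/A) * (((B+1)/B)/((A+1)/A))"
        unfolding h1 ..
      also have "... = (B - A) * (1+B) / (B * (1 + A))"
        using that by (simp add: divide_simps) (simp add: algebra_simps)
      also have "... = - ((A/B - 1) * ((1+B)/(1+A)))"
      proof -
        have "A/B - 1 = - ((B - A)/B)" using that by (simp add: field_simps)
        then show ?thesis by simp
      qed
      finally have PQ: "(B/A - 1) * ((1 + 1/B)/(1 + 1/A)) = - ((A/B - 1) * ((1+B)/(1+A)))" .
      have L: "(B/A - 1)/(-a - -b) * ((1 + 1/B)/(1 + 1/A)) = ((B/A - 1) * ((1 + 1/B)/(1 + 1/A))) / (b - a)"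
        by simp
      have R: "(A/B - 1)/(a-b) * ((1+B)/(1+A)) = ((A/B - 1) * ((1+B)/(1+A))) / (a - b)"
        by simp
      have D: "- x / (b - a) = x / (a - b)" for x :: real
        by (metis minus_diff_eq divide_minus_right minus_divide_left)
      show ?thesis unfolding L R PQ D ..
    qed
    ultimately show ?thesis by simp
  qed
  moreover have "1 + exp b \<noteq> 0" using add_pos_pos[of 1 "exp b"] by simp
  ultimately show ?thesis using c by (cases "a = b") auto
qed

end
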